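(* (Expression Well-Typedness.) Let $\Gamma$ be a Bundl context, $e$ an expression, $\tau$ a type, $\pi,\pi'$ perspectives, $p\in\mathbb{N}$ and $\eta,\sigma,\Sigma$ local, shared and global memories, and assume all array accesses are in bounds (whenever during evaluation an array expression evaluates to $\langle l,n\rangle$ and its index to $i$, then $0\le i<n$). If $\Gamma\vdash^{\pi} e:\tau$, $\Gamma\vdash\eta,\sigma,\Sigma$, $\pi\vdash p$, and $\eta,\sigma,\Sigma\vdash^{\pi}_{\pi'} e\Downarrow v$, then $\eta,\sigma,\Sigma\vdash v:\tau$.
   Context: Bundl is parameterized by fixed positive integers $T$ (threads per block) and $B$ (blocks per grid). Levels $h\in\{\mathrm{Thread},\mathrm{Block},\mathrm{Grid}\}$ with $\mathrm{Thread}\le\mathrm{Block}\le\mathrm{Grid}$; memory kinds $l\in\{\mathrm{Local},\mathrm{Shared},\mathrm{Global}\}$. A perspective is $\pi=(h,n)$, $n\in\mathbb{N}$; $(h_1,n_1)\le(h_2,n_2)$ iff $n_1\mid n_2$ and $h_1\le h_2$; $<$ is the strict version. Level ratios $\mathrm{Grid}/\mathrm{Block}=B$, $\mathrm{Block}/\mathrm{Thread}=T$ (with $h/h=1$, $\mathrm{Grid}/\mathrm{Thread}=BT$); $(h_1,n_1)/(h_2,n_2)=((h_1/h_2)\cdot n_1)/n_2$. For $\pi=(h,n)$, $\pi\vdash p$ means $p<n$. Types: base types $\beta ::= \mathrm{bool}\mid\mathrm{int}\mid\mathrm{float}$; $\tau ::= \beta\mid\beta[]^{l}\mid\mathrm{Fun}(\Gamma',\pi,m)\mid\mathrm{async}\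 \tau$. Contexts $\Gamma$ are finite lists of bindings $x:^{\pi}\tau$. Expressions: $e ::= x\mid n\mid f\mid b\mid\mathrm{partition\_id}\mid e_1[e_2]\mid e_1\ \mathrm{bop}\ e_2\mid e_1\ \mathrm{cmp}\ e_2$ ($\mathrm{bop}$ fixed total functions $\mathbb{Z}^2\to\mathbb{Z}$, $\mathrm{cmp}$ fixed total functions $\mathbb{Z}^2\to\{\mathrm{true},\mathrm{false}\}$). Expression typing $\Gamma\vdash^{\pi}e:\tau$ is the least relation with: if $x:^{\pi}\tau\in\Gamma$ then $\Gamma\vdash^{\pi}x:\tau$; literals typed int/float/bool at any $\pi$; if $\pi<(\mathrm{Grid},1)$ then $\Gamma\vdash^{\pi}\mathrm{partition\_id}:\mathrm{int}$; if $\Gamma\vdash^{\pi''}e_1:\tau[]^{l}$, $\Gamma\vdash^{\pi}e_2:\mathrm{int}$, $l\in\{\mathrm{Global},\mathrm{Local}\}$, $\pi\le\pi''$ then $\Gamma\vdash^{\pi}e_1[e_2]:\tau$; if $\Gamma\vdash^{\pi''}e_1:\tau[]^{\mathrm{Shared}}$, $\Gamma\vdash^{\pi}e_2:\mathrm{int}$, $\pi\le(\mathrm{Block},1)$, $\pi\le\pi''$ then $\Gamma\vdash^{\pi}e_1[e_2]:\tau$; if $e_1,e_2$ have type int at $\pi$ then $e_1\ \mathrm{bop}\ e_2:\mathrm{int}$ and $e_1\ \mathrm{cmp}\ e_2:\mathrm{bool}$ at $\pi$. Values are integers, floats, booleans, array references $\langle x,n\rangle$ and function closures. Memories $\eta$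 (local), $\sigma$ (shared), $\Sigma$ (global) are finite maps from names (identified with integer locations) to values annotated with perspectives ($x\mapsto^{\pi}v$), with disjoint domains; $\mathrm{get}(\eta,\sigma,\Sigma,x)$ returns the value at $x$ from whichever memory contains it. Value typing $\eta,\sigma,\Sigma\vdash v:\tau$: integers:int, booleans:bool, floats:float; $\langle x,n\rangle:\beta[]^{l}$ iff $\mathrm{get}(\eta,\sigma,\Sigma,x+i):\beta$ for all $i<n$; closures have function types according to a fixed given relation. Environment typing $\Gamma\vdash\eta,\sigma,\Sigma$ holds iff for every binding $x:^{\pi}\tau\in\Gamma$: for $\tau$ a base type or $\beta[]^{\mathrm{Local}}$, $\eta$ maps $x\mapsto^{\pi}v$ with $v:\tau$; for $\beta[]^{\mathrm{Shared}}$, $\sigma$ maps $x\mapsto^{\pi}v$ with $v:\tau$; for $\beta[]^{\mathrm{Global}}$ or a function type, $\Sigma$ maps $x\mapsto^{\pi}v$ with $v:\tau$; and no binding has an $\mathrm{async}$ type. Evaluation $\eta,\sigma,\Sigma\vdash^{\pi}_{\pi'}e\Downarrow v$ is the least relation with: if $\pi<(\mathrm{Grid},1)$ and $\pi'\le\pi$ then $\mathrm{partition\_id}\Downarrow\pi/\pi'-1$; $x\Downarrow\mathrm{get}(\eta,\sigma,\Sigma,x)$; if $e_1\Downarrow\langle l,n\rangle$, $e_2\Downarrow i$, $i<n$, $\pi'\le\pi$ then $e_1[e_2]\Downarrow\mathrm{get}(\eta,\sigma,\Sigma,l+i)$; literals evaluate to themselves; $e_1\ \mathrm{bop}\ e_2$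 and $e_1\ \mathrm{cmp}\ e_2$ evaluate by evaluating both operands (at the same $\pi,\pi'$) and applying the operation. *)

theory Defs
  imports Main "HOL.Real"
begin

datatype level = Thread | Block | Grid
datatype memkind = Local | Shared | Global

fun level_le :: "level \<Rightarrow> level \<Rightarrow> bool" where
  "level_le Thread _ = True"
| "level_le Block h = (h = Block \<or> h = Grid)"
| "level_le Grid h = (h = Grid)"

type_synonym persp = "level \<times> nat"

definition pleq :: "persp \<Rightarrow> persp \<Rightarrow> bool" where
  "pleq p1 p2 = (snd p1 dvd snd p2 \<and> level_le (fst p1) (fst p2))"

definition pless :: "persp \<Rightarrow> persp \<Rightarrow> bool" where
  "pless p1 p2 = (pleq p1 p2 \<and> p1 \<noteq> p2)"

text \<open>Level ratio h1/h2 (only meaningful for h2 \<le> h1; other cases are never used).\<close>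
fun lratio :: "nat \<Rightarrow> nat \<Rightarrow> level \<Rightarrow> level \<Rightarrow> nat" where
  "lratio T B Grid Block = B"
| "lratio T B Block Thread = T"
| "lratio T B Grid Thread = B * T"
| "lratio T B h1 h2 = (if h1 = h2 then 1 else 0)"

definition pdiv :: "nat \<Rightarrow> nat \<Rightarrow> persp \<Rightarrow> persp \<Rightarrow> nat" where
  "pdiv T B p1 p2 = (lratio T B (fst p1) (fst p2) * snd p1) div snd p2"

definition pvdash :: "persp \<Rightarrow> nat \<Rightarrow> bool" where
  "pvdash pi p = (p < snd pi)"

datatype base = TBool | TInt | TFloat

type_synonym name = int

datatype ty = TBase base | TArr base memkind
  | TFun "(name \<times> persp \<times> ty) list" persp nat
  | TAsync ty

type_synonym ctx = "(name \<times> persp \<times> ty) list"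

datatype exp = EVar name | EInt int | EFloat real | EBool bool | EPid
  | EIdx exp exp
  | EBop "int \<Rightarrow> int \<Rightarrow> int" exp exp
  | ECmp "int \<Rightarrow> int \<Rightarrow> bool" exp exp

text \<open>Closures are abstract (type parameter 'c); their typing is a given relation.\<close>
datatype 'c val = VInt int | VFloat real | VBool bool | VArr name nat | VClos 'c

type_synonym 'c mem = "name \<Rightarrow> (persp \<times> 'c val) option"

definition get :: "'c mem \<Rightarrow> 'c mem \<Rightarrow> 'c mem \<Rightarrow> name \<Rightarrow> 'c val option" where
  "get \<eta> \<sigma> \<Sigma> x =
     (case \<eta> x of Some (_, v) \<Rightarrow> Some v
      | None \<Rightarrow> (case \<sigma> x of Some (_, v) \<Rightarrow> Some v
               | None \<Rightarrow> (case \<Sigma> x of Some (_, v) \<Rightarrow> Some v | None \<Rightarrow> None)))"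

definition memories_ok :: "'c mem \<Rightarrow> 'c mem \<Rightarrow> 'c mem \<Rightarrow> bool" where
  "memories_ok \<eta> \<sigma> \<Sigma> =
     (finite (dom \<eta>) \<and> finite (dom \<sigma>) \<and> finite (dom \<Sigma>) \<and>
      dom \<eta> \<inter> dom \<sigma> = {} \<and> dom \<eta> \<inter> dom \<Sigma> = {} \<and> dom \<sigma> \<inter> dom \<Sigma> = {})"

fun base_ty :: "'c val \<Rightarrow> base \<Rightarrow> bool" where
  "base_ty (VInt _) TInt = True"
| "base_ty (VBool _) TBool = True"
| "base_ty (VFloat _) TFloat = True"
| "base_ty _ _ = False"

fun vty :: "('c \<Rightarrow> ty \<Rightarrow> bool) \<Rightarrow> 'c mem \<Rightarrow> 'c mem \<Rightarrow> 'c mem \<Rightarrow> 'c val \<Rightarrow> ty \<Rightarrow> bool" where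
  "vty ctyp \<eta> \<sigma> \<Sigma> v (TBase \<beta>) = base_ty v \<beta>"
| "vty ctyp \<eta> \<sigma> \<Sigma> (VArr x n) (TArr \<beta> l) =
     (\<forall>i<n. \<exists>w. get \<eta> \<sigma> \<Sigma> (x + int i) = Some w \<and> base_ty w \<beta>)"
| "vty ctyp \<eta> \<sigma> \<Sigma> (VClos c) (TFun G p m) = ctyp c (TFun G p m)"
| "vty ctyp \<eta> \<sigma> \<Sigma> _ _ = False"

definition env_ty :: "('c \<Rightarrow> ty \<Rightarrow> bool) \<Rightarrow> ctx \<Rightarrow> 'c mem \<Rightarrow> 'c mem \<Rightarrow> 'c mem \<Rightarrow> bool" where
  "env_ty ctyp \<Gamma> \<eta> \<sigma> \<Sigma> =
     (\<forall>(x, \<pi>, \<tau>) \<in> set \<Gamma>.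
        (case \<tau> of
           TBase _ \<Rightarrow> \<exists>v. \<eta> x = Some (\<pi>, v) \<and> vty ctyp \<eta> \<sigma> \<Sigma> v \<tau>
         | TArr _ Local \<Rightarrow> \<exists>v. \<eta> x = Some (\<pi>, v) \<and> vty ctyp \<eta> \<sigma> \<Sigma> v \<tau>
         | TArr _ Shared \<Rightarrow> \<exists>v. \<sigma> x = Some (\<pi>, v) \<and> vty ctyp \<eta> \<sigma> \<Sigma> v \<tau>
         | TArr _ Global \<Rightarrow> \<exists>v. \<Sigma> x = Some (\<pi>, v) \<and> vty ctyp \<eta> \<sigma> \<Sigma> v \<tau>
         | TFun _ _ _ \<Rightarrow> \<exists>v. \<Sigma> x = Some (\<pi>, v) \<and> vty ctyp \<eta> \<sigma> \<Sigma> v \<tau>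
         | TAsync _ \<Rightarrow> False))"

inductive has_ty :: "ctx \<Rightarrow> persp \<Rightarrow> exp \<Rightarrow> ty \<Rightarrow> bool" where
  ty_var: "(x, \<pi>, \<tau>) \<in> set \<Gamma> \<Longrightarrow> has_ty \<Gamma> \<pi> (EVar x) \<tau>"
| ty_int: "has_ty \<Gamma> \<pi> (EInt n) (TBase TInt)"
| ty_float: "has_ty \<Gamma> \<pi> (EFloat f) (TBase TFloat)"
| ty_bool: "has_ty \<Gamma> \<pi> (EBool b) (TBase TBool)"
| ty_pid: "pless \<pi> (Grid, 1) \<Longrightarrow> has_ty \<Gamma> \<pi> EPid (TBase TInt)"
| ty_idx_gl: "\<lbrakk> has_ty \<Gamma> \<pi>'' e1 (TArr \<beta> l); has_ty \<Gamma> \<pi> e2 (TBase TInt);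
               l \<in> {Global, Local}; pleq \<pi> \<pi>'' \<rbrakk>
             \<Longrightarrow> has_ty \<Gamma> \<pi> (EIdx e1 e2) (TBase \<beta>)"
| ty_idx_sh: "\<lbrakk> has_ty \<Gamma> \<pi>'' e1 (TArr \<beta> Shared); has_ty \<Gamma> \<pi> e2 (TBase TInt);
               pleq \<pi> (Block, 1); pleq \<pi> \<pi>'' \<rbrakk>
             \<Longrightarrow> has_ty \<Gamma> \<pi> (EIdx e1 e2) (TBase \<beta>)"
| ty_bop: "\<lbrakk> has_ty \<Gamma> \<pi> e1 (TBase TInt); has_ty \<Gamma> \<pi> e2 (TBase TInt) \<rbrakk>
             \<Longrightarrow> has_ty \<Gamma> \<pi> (EBop f e1 e2) (TBase TInt)"
| ty_cmp: "\<lbrakk> has_ty \<Gamma> \<pi> e1 (TBase TInt); has_ty \<Gamma> \<pi> e2 (TBase TInt) \<rbrakk>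
             \<Longrightarrow> has_ty \<Gamma> \<pi> (ECmp c e1 e2) (TBase TBool)"

section \<open>Evaluation (parameterized by T threads per block, B blocks per grid)\<close>

inductive eval :: "nat \<Rightarrow> nat \<Rightarrow> 'c mem \<Rightarrow> 'c mem \<Rightarrow> 'c mem \<Rightarrow> persp \<Rightarrow> persp \<Rightarrow> exp \<Rightarrow> 'c val \<Rightarrow> bool"
  for T B \<eta> \<sigma> \<Sigma> where
  ev_pid: "\<lbrakk> pless \<pi> (Grid, 1); pleq \<pi>' \<pi> \<rbrakk>
           \<Longrightarrow> eval T B \<eta> \<sigma> \<Sigma> \<pi> \<pi>' EPid (VInt (int (pdiv T B \<pi> \<pi>') - 1))"
| ev_var: "get \<eta> \<sigma> \<Sigma> x = Some v \<Longrightarrow> eval T B \<eta> \<sigma> \<Sigma> \<pi> \<pi>' (EVar x) v"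
| ev_idx: "\<lbrakk> eval T B \<eta> \<sigma> \<Sigma> \<pi> \<pi>' e1 (VArr l n); eval T B \<eta> \<sigma> \<Sigma> \<pi> \<pi>' e2 (VInt i);
            i < int n; pleq \<pi>' \<pi>; get \<eta> \<sigma> \<Sigma> (l + i) = Some v \<rbrakk>
           \<Longrightarrow> eval T B \<eta> \<sigma> \<Sigma> \<pi> \<pi>' (EIdx e1 e2) v"
| ev_int: "eval T B \<eta> \<sigma> \<Sigma> \<pi> \<pi>' (EInt n) (VInt n)"
| ev_float: "eval T B \<eta> \<sigma> \<Sigma> \<pi> \<pi>' (EFloat f) (VFloat f)"
| ev_bool: "eval T B \<eta> \<sigma> \<Sigma> \<pi> \<pi>' (EBool b) (VBool b)"
| ev_bop: "\<lbrakk> eval T B \<eta> \<sigma> \<Sigma> \<pi> \<pi>' e1 (VInt a); eval T B \<eta> \<sigma> \<Sigma> \<pi> \<pi>' e2 (VInt b) \<rbrakk>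
           \<Longrightarrow> eval T B \<eta> \<sigma> \<Sigma> \<pi> \<pi>' (EBop f e1 e2) (VInt (f a b))"
| ev_cmp: "\<lbrakk> eval T B \<eta> \<sigma> \<Sigma> \<pi> \<pi>' e1 (VInt a); eval T B \<eta> \<sigma> \<Sigma> \<pi> \<pi>' e2 (VInt b) \<rbrakk>
           \<Longrightarrow> eval T B \<eta> \<sigma> \<Sigma> \<pi> \<pi>' (ECmp c e1 e2) (VBool (c a b))"

fun subexps :: "exp \<Rightarrow> exp set" where
  "subexps (EIdx e1 e2) = insert (EIdx e1 e2) (subexps e1 \<union> subexps e2)"
| "subexps (EBop f e1 e2) = insert (EBop f e1 e2) (subexps e1 \<union> subexps e2)"
| "subexps (ECmp c e1 e2) = insert (ECmp c e1 e2) (subexps e1 \<union> subexps e2)"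
| "subexps e = {e}"

text \<open>Every subexpression is evaluated at the same perspectives, so this quantifies over all
  array accesses occurring during evaluation.\<close>
definition in_bounds :: "nat \<Rightarrow> nat \<Rightarrow> 'c mem \<Rightarrow> 'c mem \<Rightarrow> 'c mem \<Rightarrow> persp \<Rightarrow> persp \<Rightarrow> exp \<Rightarrow> bool" where
  "in_bounds T B \<eta> \<sigma> \<Sigma> \<pi> \<pi>' e =
     (\<forall>e1 e2 l n i. EIdx e1 e2 \<in> subexps e \<longrightarrow>
        eval T B \<eta> \<sigma> \<Sigma> \<pi> \<pi>' e1 (VArr l n) \<longrightarrow>
        eval T B \<eta> \<sigma> \<Sigma> \<pi> \<pi>' e2 (VInt i) \<longrightarrow> 0 \<le> i \<and> i < int n)"

end

theory Submission
  imports Defs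
begin

lemma var_ok:
  assumes m: "memories_ok \<eta> \<sigma> \<Sigma>" and env: "env_ty ctyp \<Gamma> \<eta> \<sigma> \<Sigma>"
    and x: "(x, \<rho>, \<tau>) \<in> set \<Gamma>" and g: "get \<eta> \<sigma> \<Sigma> x = Some v"
  shows "vty ctyp \<eta> \<sigma> \<Sigma> v \<tau>"
proof -
  have e: "case \<tau> of
           TBase _ \<Rightarrow> \<exists>v. \<eta> x = Some (\<rho>, v) \<and> vty ctyp \<eta> \<sigma> \<Sigma> v \<tau>
         | TArr _ Local \<Rightarrow> \<exists>v. \<eta> x = Some (\<rho>, v) \<and> vty ctyp \<eta> \<sigma> \<Sigma> v \<tau>
         | TArr _ Shared \<Rightarrow> \<exists>v. \<sigma> x = Some (\<rho>, v) \<and> vty ctyp \<eta> \<sigma> \<Sigma> v \<tau>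
         | TArr _ Global \<Rightarrow> \<exists>v. \<Sigma> x = Some (\<rho>, v) \<and> vty ctyp \<eta> \<sigma> \<Sigma> v \<tau>
         | TFun _ _ _ \<Rightarrow> \<exists>v. \<Sigma> x = Some (\<rho>, v) \<and> vty ctyp \<eta> \<sigma> \<Sigma> v \<tau>
         | TAsync _ \<Rightarrow> False"
    using env x unfolding env_ty_def by fastforce
  have d1: "\<eta> x = None \<or> \<sigma> x = None" and d2: "\<eta> x = None \<or> \<Sigma> x = None"
    and d3: "\<sigma> x = None \<or> \<Sigma> x = None"
    using m unfolding memories_ok_def by auto
  show ?thesis
  proof (cases \<tau>)
    case (TArr b k)
    then show ?thesis using e g d1 d2 d3
      by (cases k) (auto simp: get_def split: option.splits)
  qed (use e g d1 d2 d3 in \<open>auto simp: get_def split: option.splits\<close>)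
qed

lemma subexps_self: "e \<in> subexps e"
  by (cases e) auto

lemma in_bounds_sub:
  assumes "in_bounds T B \<eta> \<sigma> \<Sigma> \<pi> \<pi>' e" "subexps e' \<subseteq> subexps e"
  shows "in_bounds T B \<eta> \<sigma> \<Sigma> \<pi> \<pi>' e'"
  using assms unfolding in_bounds_def by blast

lemma main:
  assumes "has_ty \<Gamma> \<rho> e \<tau>"
  shows "memories_ok \<eta> \<sigma> \<Sigma> \<Longrightarrow> env_ty ctyp \<Gamma> \<eta> \<sigma> \<Sigma> \<Longrightarrow>
     in_bounds T B \<eta> \<sigma> \<Sigma> \<pi> \<pi>' e \<Longrightarrow> eval T B \<eta> \<sigma> \<Sigma> \<pi> \<pi>' e v \<Longrightarrow> vty ctyp \<eta> \<sigma> \<Sigma> v \<tau>"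
  using assms
proof (induction arbitrary: v rule: has_ty.induct)
  case (ty_var x \<pi> \<tau> \<Gamma>)
  then show ?case by (auto elim: eval.cases intro: var_ok)
next
  case (ty_idx_gl \<Gamma> \<pi>'' e1 \<beta> l \<rho> e2)
  from ty_idx_gl.prems(4) obtain a n i where
    ev1: "eval T B \<eta> \<sigma> \<Sigma> \<pi> \<pi>' e1 (VArr a n)" and ev2: "eval T B \<eta> \<sigma> \<Sigma> \<pi> \<pi>' e2 (VInt i)"
    and lt: "i < int n" and g: "get \<eta> \<sigma> \<Sigma> (a + i) = Some v"
    by (auto elim: eval.cases)
  have ib1: "in_bounds T B \<eta> \<sigma> \<Sigma> \<pi> \<pi>' e1"
    by (rule in_bounds_sub[OF ty_idx_gl.prems(3)]) auto
  have va: "vty ctyp \<eta> \<sigma> \<Sigma> (VArr a n) (TArr \<beta> l)"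
    using ty_idx_gl.IH(1)[OF ty_idx_gl.prems(1,2) ib1 ev1] .
  have "0 \<le> i" using ty_idx_gl.prems(3) ev1 ev2 unfolding in_bounds_def by auto
  obtain w where "get \<eta> \<sigma> \<Sigma> (a + int (nat i)) = Some w" "base_ty w \<beta>"
  proof -
    assume h: "\<And>w. get \<eta> \<sigma> \<Sigma> (a + int (nat i)) = Some w \<Longrightarrow> base_ty w \<beta> \<Longrightarrow> thesis"
    have "nat i < n" using lt \<open>0 \<le> i\<close> by simp
    then show thesis using h va by auto
  qed
  then show ?case using g \<open>0 \<le> i\<close> by simp
next
  case (ty_idx_sh \<Gamma> \<pi>'' e1 \<beta> \<rho> e2)
  from ty_idx_sh.prems(4) obtain a n i where
    ev1: "eval T B \<eta> \<sigma> \<Sigma> \<pi> \<pi>' e1 (VArr a n)" and ev2: "eval T B \<eta> \<sigma> \<Sigma> \<pi> \<pi>' e2 (VInt i)"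
    and lt: "i < int n" and g: "get \<eta> \<sigma> \<Sigma> (a + i) = Some v"
    by (auto elim: eval.cases)
  have ib1: "in_bounds T B \<eta> \<sigma> \<Sigma> \<pi> \<pi>' e1"
    by (rule in_bounds_sub[OF ty_idx_sh.prems(3)]) auto
  have va: "vty ctyp \<eta> \<sigma> \<Sigma> (VArr a n) (TArr \<beta> Shared)"
    using ty_idx_sh.IH(1)[OF ty_idx_sh.prems(1,2) ib1 ev1] .
  have "0 \<le> i" using ty_idx_sh.prems(3) ev1 ev2 unfolding in_bounds_def by auto
  obtain w where "get \<eta> \<sigma> \<Sigma> (a + int (nat i)) = Some w" "base_ty w \<beta>"
  proof -
    assume h: "\<And>w. get \<eta> \<sigma> \<Sigma> (a + int (nat i)) = Some w \<Longrightarrow> base_ty w \<beta> \<Longrightarrow> thesis"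
    have "nat i < n" using lt \<open>0 \<le> i\<close> by simp
    then show thesis using h va by auto
  qed
  then show ?case using g \<open>0 \<le> i\<close> by simp
qed (auto elim: eval.cases)

theorem lemmaA6:
  fixes T B :: nat
    and ctyp :: "'c \<Rightarrow> ty \<Rightarrow> bool"
    and \<Gamma> :: ctx and e :: exp and \<tau> :: ty and \<pi> \<pi>' :: persp and p :: nat
    and \<eta> \<sigma> \<Sigma> :: "'c mem" and v :: "'c val"
  assumes "0 < T" and "0 < B"
    and "memories_ok \<eta> \<sigma> \<Sigma>"
    and "in_bounds T B \<eta> \<sigma> \<Sigma> \<pi> \<pi>' e"
    and "has_ty \<Gamma> \<pi> e \<tau>"
    and "env_ty ctyp \<Gamma> \<eta> \<sigma> \<Sigma>"
    and "pvdash \<pi> p"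
    and "eval T B \<eta> \<sigma> \<Sigma> \<pi> \<pi>' e v"
  shows "vty ctyp \<eta> \<sigma> \<Sigma> v \<tau>"
  using main[OF assms(5) assms(3) assms(6) assms(4) assms(8)] .

end
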